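(* For every $n\in\mathbb N$, the set $\{\mathrm{First}(n),\ \mathrm{Next}(\mathrm{First}(n)),\ \mathrm{Next}(\mathrm{Next}(\mathrm{First}(n))),\ldots\}$ of naturally labeled topologies obtained by iteratively applying $\mathrm{Next}$ to $\mathrm{First}(n)$ (until $\mathrm{Next}$ is undefined) is exactly the set of all naturally labeled topologies of size $n$.
   Context: Let $X_n=\{0,1,\ldots,n-1\}$. A naturally labeled (NL) poset on $X_n$ is a partial order $\preceq$ on $X_n$ with $x\preceq y\Rightarrow x\le y$. A topology of size $n$ is a set $T$ of subsets of $X_n$ containing $\emptyset$ and $X_n$ and closed under union and intersection; it is a naturally labeled topology (NLT) if it equals the set of order ideals (downward closed subsets) of some NL poset on $X_n$. Subsets of $X_n$ are identified with the increasing words of their elements, and the length-lexicographic order compares words first by length, then lexicographically. Definitions: for an NLT $T$ of size $n$ and $S\in T$, $\mathrm{Grow}_S(T)=T\cup\{U\cup\{n\}: U\in T,\ S\subseteq U\}$ (an NLT of size $n+1$). $\mathrm{First}(n)=\mathrm{Grow}_\emptyset^n(\{\emptyset\})$ ($n$-fold application starting from the size-$0$ topology $\{\emptyset\}$). For $T$ of size $n\ge1$, $\mathrm{Cut}(T)=\{U\in T: n-1\notin U\}$ (size $n-1$). For $S\in T$, $\mathrm{Next}_S(T)$ is the element of $T$ immediately following $S$ in the length-lexicographic order, undefined if $S$ is the last element of $T$. $\mathrm{Next}(\{\emptyset\})$ is undefined; for an NLT $T$ of size $n\ge1$, $\mathrm{Next}(T)$ is defined recursively: let $S$ be the smallest (for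 inclusion) set of $T$ containing $n-1$, $S'=S\setminus\{n-1\}$, $T'=\mathrm{Cut}(T)$; if $\mathrm{Next}_{S'}(T')$ is defined, $\mathrm{Next}(T)=\mathrm{Grow}_{S''}(T')$ with $S''=\mathrm{Next}_{S'}(T')$; otherwise, if $\mathrm{Next}(T')$ is defined, $\mathrm{Next}(T)=\mathrm{Grow}_\emptyset(\mathrm{Next}(T'))$; otherwise $\mathrm{Next}(T)$ is undefined. *)

theory Defs
  imports Main
begin

text \<open>Topologies of size n are sets of subsets of X_n = {0..<n}; the size n is passed explicitly.\<close>

definition NL_poset :: "nat \<Rightarrow> (nat \<times> nat) set \<Rightarrow> bool" where
  "NL_poset n R \<longleftrightarrow> R \<subseteq> {0..<n} \<times> {0..<n} \<and> partial_order_on {0..<n} R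
     \<and> (\<forall>x y. (x, y) \<in> R \<longrightarrow> x \<le> y)"

definition order_ideals :: "nat \<Rightarrow> (nat \<times> nat) set \<Rightarrow> nat set set" where
  "order_ideals n R = {U. U \<subseteq> {0..<n} \<and> (\<forall>y\<in>U. \<forall>x. (x, y) \<in> R \<longrightarrow> x \<in> U)}"

definition NLT :: "nat \<Rightarrow> nat set set \<Rightarrow> bool" where
  "NLT n T \<longleftrightarrow> (\<exists>R. NL_poset n R \<and> T = order_ideals n R)"

definition llex_less :: "nat set \<Rightarrow> nat set \<Rightarrow> bool" where
  "llex_less A B \<longleftrightarrow> card A < card B \<or>
     (card A = card B \<and> (sorted_list_of_set A, sorted_list_of_set B) \<in> lexord {(x, y). x < y})"

definition Grow :: "nat \<Rightarrow> nat set \<Rightarrow> nat set set \<Rightarrow> nat set set" where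
  "Grow n S T = T \<union> {U \<union> {n} | U. U \<in> T \<and> S \<subseteq> U}"

primrec First :: "nat \<Rightarrow> nat set set" where
  "First 0 = {{}}"
| "First (Suc n) = Grow n {} (First n)"

definition Cut :: "nat \<Rightarrow> nat set set \<Rightarrow> nat set set" where
  "Cut n T = {U \<in> T. n \<notin> U}"

definition NextS :: "nat set \<Rightarrow> nat set set \<Rightarrow> nat set option" where
  "NextS S T = (if \<exists>U\<in>T. llex_less S U
     then Some (THE U. U \<in> T \<and> llex_less S U \<and> (\<forall>V\<in>T. llex_less S V \<longrightarrow> U = V \<or> llex_less U V))
     else None)"

definition smallest_containing :: "nat \<Rightarrow> nat set set \<Rightarrow> nat set" where
  "smallest_containing x T = (THE S. S \<in> T \<and> x \<in> S \<and> (\<forall>U\<in>T. x \<in> U \<longrightarrow> S \<subseteq> U))"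

primrec Next :: "nat \<Rightarrow> nat set set \<Rightarrow> nat set set option" where
  "Next 0 T = None"
| "Next (Suc n) T =
     (let S = smallest_containing n T; S' = S - {n}; T' = Cut n T in
      case NextS S' T' of
        Some S'' \<Rightarrow> Some (Grow n S'' T')
      | None \<Rightarrow> map_option (Grow n {}) (Next n T'))"

primrec iterNext :: "nat \<Rightarrow> nat \<Rightarrow> nat set set option" where
  "iterNext n 0 = Some (First n)"
| "iterNext n (Suc k) = Option.bind (iterNext n k) (Next n)"

end

theory Submission
  imports Defs
begin

lemma llex_irrefl: "\<not> llex_less A A"
  unfolding llex_less_def using lexord_irreflexive[of "{(x, y). x < (y::nat)}"] by auto

lemma llex_trans: "llex_less A B \<Longrightarrow> llex_less B C \<Longrightarrow> llex_less A C"
proof -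
  have tr: "trans {(x, y). x < (y::nat)}" by (auto simp: trans_def)
  assume "llex_less A B" "llex_less B C"
  then show ?thesis unfolding llex_less_def using lexord_trans[OF _ _ tr] by force
qed

lemma llex_total: "finite A \<Longrightarrow> finite B \<Longrightarrow> A \<noteq> B \<Longrightarrow> llex_less A B \<or> llex_less B A"
proof -
  assume f: "finite A" "finite B" and ne: "A \<noteq> B"
  have tot: "\<forall>a b. (a,b) \<in> {(x, y). x < (y::nat)} \<or> a = b \<or> (b,a) \<in> {(x, y). x < (y::nat)}" by auto
  have "sorted_list_of_set A \<noteq> sorted_list_of_set B"
    using f ne by (metis set_sorted_list_of_set)
  then have "(sorted_list_of_set A, sorted_list_of_set B) \<in> lexord {(x, y). x < (y::nat)} \<or>
     (sorted_list_of_set B, sorted_list_of_set A) \<in> lexord {(x, y). x < (y::nat)}"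
    using lexord_linear[OF tot] by blast
  then show ?thesis unfolding llex_less_def by auto
qed

lemma llex_empty: "finite A \<Longrightarrow> A \<noteq> {} \<Longrightarrow> llex_less {} A"
  unfolding llex_less_def by auto

lemma llex_max: "finite F \<Longrightarrow> F \<noteq> {} \<Longrightarrow> \<forall>A\<in>F. finite A \<Longrightarrow> \<exists>M\<in>F. \<forall>V\<in>F. V = M \<or> llex_less V M"
proof (induction F rule: finite_ne_induct)
  case (singleton x)
  then show ?case by auto
next
  case (insert x F)
  then obtain M where M: "M \<in> F" "\<forall>V\<in>F. V = M \<or> llex_less V M" by auto
  show ?case
  proof (cases "llex_less x M")
    case True
    then show ?thesis using M by auto
  next
    case False
    have "finite x" "finite M" using insert M by auto
    then have "x = M \<or> llex_less M x" using llex_total False by blast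
    then show ?thesis
    proof
      assume "x = M" then show ?thesis using M by auto
    next
      assume xM: "llex_less M x"
      have "\<forall>V\<in>insert x F. V = x \<or> llex_less V x"
      proof
        fix V assume "V \<in> insert x F"
        then have "V = x \<or> V = M \<or> llex_less V M" using M by auto
        then show "V = x \<or> llex_less V x" using xM llex_trans[of V M x] by auto
      qed
      then show ?thesis by auto
    qed
  qed
qed

lemma llex_min: "finite F \<Longrightarrow> F \<noteq> {} \<Longrightarrow> \<forall>A\<in>F. finite A \<Longrightarrow> \<exists>M\<in>F. \<forall>V\<in>F. V = M \<or> llex_less M V"
proof (induction F rule: finite_ne_induct)
  case (singleton x)
  then show ?case by auto
next
  case (insert x F)
  then obtain M where M: "M \<in> F" "\<forall>V\<in>F. V = M \<or> llex_less M V" by auto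
  show ?case
  proof (cases "llex_less M x")
    case True
    then show ?thesis using M by auto
  next
    case False
    have "finite x" "finite M" using insert M by auto
    then have "x = M \<or> llex_less x M" using llex_total False by blast
    then show ?thesis
    proof
      assume "x = M" then show ?thesis using M by auto
    next
      assume xM: "llex_less x M"
      have "\<forall>V\<in>insert x F. V = x \<or> llex_less x V"
      proof
        fix V assume "V \<in> insert x F"
        then have "V = x \<or> V = M \<or> llex_less M V" using M by auto
        then show "V = x \<or> llex_less x V" using xM llex_trans[of x M V] by auto
      qed
      then show ?thesis by auto
    qed
  qed
qed

lemma NextS_Some:
  assumes "\<forall>V\<in>T. finite V" "U \<in> T" "llex_less S U"
    "\<not> (\<exists>V\<in>T. llex_less S V \<and> llex_less V U)"
  shows "NextS S T = Some U"
proof -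
  have P: "U \<in> T \<and> llex_less S U \<and> (\<forall>V\<in>T. llex_less S V \<longrightarrow> U = V \<or> llex_less U V)"
  proof (intro conjI ballI impI)
    fix V assume V: "V \<in> T" "llex_less S V"
    have "finite U" "finite V" using assms V by auto
    then have "U = V \<or> llex_less U V \<or> llex_less V U" using llex_total by blast
    then show "U = V \<or> llex_less U V" using assms V by blast
  qed (use assms in auto)
  have "(THE U. U \<in> T \<and> llex_less S U \<and> (\<forall>V\<in>T. llex_less S V \<longrightarrow> U = V \<or> llex_less U V)) = U"
  proof (rule the_equality)
    fix U' assume "U' \<in> T \<and> llex_less S U' \<and> (\<forall>V\<in>T. llex_less S V \<longrightarrow> U' = V \<or> llex_less U' V)"
    then have "U' = U \<or> llex_less U' U" using assms(2,3) by auto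
    then show "U' = U" using assms(4) \<open>U' \<in> T \<and> llex_less S U' \<and> _\<close> by auto
  qed (rule P)
  then show ?thesis unfolding NextS_def using assms by auto
qed

lemma NextS_mem:
  assumes "NextS S T = Some U" "finite T" "\<forall>V\<in>T. finite V"
  shows "U \<in> T"
proof -
  have ex: "\<exists>V\<in>T. llex_less S V"
  proof (rule ccontr)
    assume "\<not> (\<exists>V\<in>T. llex_less S V)"
    then have "NextS S T = None" unfolding NextS_def by simp
    then show False using assms(1) by simp
  qed
  define F where "F = {V\<in>T. llex_less S V}"
  have "finite F" using assms(2) unfolding F_def by simp
  moreover have "F \<noteq> {}" using ex unfolding F_def by blast
  moreover have "\<forall>A\<in>F. finite A" using assms(3) unfolding F_def by blast
  ultimately have "\<exists>M\<in>F. \<forall>V\<in>F. V = M \<or> llex_less M V" by (rule llex_min)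
  then obtain M where M: "M \<in> F" "\<forall>V\<in>F. V = M \<or> llex_less M V" by blast
  have "\<not> (\<exists>V\<in>T. llex_less S V \<and> llex_less V M)"
  proof
    assume "\<exists>V\<in>T. llex_less S V \<and> llex_less V M"
    then obtain V where V: "V \<in> F" "llex_less V M" unfolding F_def by blast
    then have "V = M \<or> llex_less M V" using M(2) by blast
    then show False using V(2) llex_irrefl[of M] llex_trans[of M V M] by auto
  qed
  moreover have "M \<in> T" "llex_less S M" using M(1) unfolding F_def by auto
  ultimately have "NextS S T = Some M" using NextS_Some[OF assms(3)] by simp
  then show ?thesis using assms(1) M(1) unfolding F_def by simp
qed

lemma NextS_None: "\<not> (\<exists>U\<in>T. llex_less S U) \<Longrightarrow> NextS S T = None"
  unfolding NextS_def by auto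


lemma NLT_sub: "NLT n T \<Longrightarrow> U \<in> T \<Longrightarrow> U \<subseteq> {0..<n}"
  unfolding NLT_def order_ideals_def by auto

lemma NLT_empty: "NLT n T \<Longrightarrow> {} \<in> T"
  unfolding NLT_def order_ideals_def by auto

lemma NLT_finite: "NLT n T \<Longrightarrow> finite T"
proof -
  assume "NLT n T"
  then have "T \<subseteq> Pow {0..<n}" using NLT_sub by blast
  then show ?thesis using finite_subset by blast
qed

lemma NLT_Grow:
  assumes "NLT n T" "S \<in> T"
  shows "NLT (Suc n) (Grow n S T)"
proof -
  obtain R where R: "NL_poset n R" "T = order_ideals n R" using assms unfolding NLT_def by blast
  have Rsub: "R \<subseteq> {0..<n} \<times> {0..<n}" and po: "partial_order_on {0..<n} R"
    and nl: "\<forall>x y. (x, y) \<in> R \<longrightarrow> x \<le> y" using R(1) unfolding NL_poset_def by auto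
  have refl: "\<forall>x\<in>{0..<n}. (x,x) \<in> R" and tr: "trans R" and an: "antisym R"
    using po unfolding partial_order_on_def preorder_on_def refl_on_def by auto
  have Ssub: "S \<subseteq> {0..<n}" and Sdown: "\<forall>y\<in>S. \<forall>x. (x, y) \<in> R \<longrightarrow> x \<in> S"
    using assms(2) R(2) unfolding order_ideals_def by auto
  define R' where "R' = R \<union> {(x, n) | x. x \<in> S} \<union> {(n, n)}"
  have R'sub: "R' \<subseteq> {0..<Suc n} \<times> {0..<Suc n}" using Rsub Ssub unfolding R'_def by auto
  have R'refl: "refl_on {0..<Suc n} R'" unfolding refl_on_def R'_def using refl
    by (auto simp: less_Suc_eq)
  have R'tr: "trans R'"
  proof (rule transI)
    fix x y z assume xy: "(x, y) \<in> R'" and yz: "(y, z) \<in> R'"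
    show "(x, z) \<in> R'"
    proof (cases "(y, z) \<in> R")
      case True
      then have "y < n" "z < n" using Rsub by auto
      then have "(x, y) \<in> R" using xy Ssub unfolding R'_def by auto
      then show ?thesis using True tr unfolding R'_def trans_def by blast
    next
      case False
      then have "z = n" "y \<in> S \<or> y = n" using yz unfolding R'_def by auto
      then show ?thesis using xy Sdown Rsub unfolding R'_def by auto
    qed
  qed
  have R'an: "antisym R'"
  proof (rule antisymI)
    fix x y assume "(x, y) \<in> R'" "(y, x) \<in> R'"
    then show "x = y" using an Rsub Ssub unfolding R'_def antisym_def by auto
  qed
  have R'nl: "\<forall>x y. (x, y) \<in> R' \<longrightarrow> x \<le> y" using nl Ssub unfolding R'_def by auto
  have "NL_poset (Suc n) R'" unfolding NL_poset_def partial_order_on_def preorder_on_def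
    using R'sub R'refl R'tr R'an R'nl by auto
  moreover have "Grow n S T = order_ideals (Suc n) R'"
  proof
    show "Grow n S T \<subseteq> order_ideals (Suc n) R'"
    proof
      fix W assume "W \<in> Grow n S T"
      then consider "W \<in> T" | U where "U \<in> T" "S \<subseteq> U" "W = U \<union> {n}" unfolding Grow_def by auto
      then show "W \<in> order_ideals (Suc n) R'"
      proof cases
        case 1
        then show ?thesis using R(2) unfolding order_ideals_def R'_def by auto
      next
        case 2
        then show ?thesis using R(2) Rsub unfolding order_ideals_def R'_def by auto
      qed
    qed
  next
    show "order_ideals (Suc n) R' \<subseteq> Grow n S T"
    proof
      fix W assume W: "W \<in> order_ideals (Suc n) R'"
      have Wsub: "W \<subseteq> {0..<Suc n}" and Wd: "\<forall>y\<in>W. \<forall>x. (x, y) \<in> R' \<longrightarrow> x \<in> W"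
        using W unfolding order_ideals_def by auto
      have U: "W - {n} \<in> T" unfolding R(2) order_ideals_def
      proof (intro CollectI conjI ballI allI impI)
        show "W - {n} \<subseteq> {0..<n}" using Wsub by auto
      next
        fix y x assume yx: "y \<in> W - {n}" "(x, y) \<in> R"
        then have "(x, y) \<in> R'" unfolding R'_def by simp
        then have "x \<in> W" using Wd yx by blast
        moreover have "x < n" using subsetD[OF Rsub yx(2)] by simp
        ultimately show "x \<in> W - {n}" by simp
      qed
      show "W \<in> Grow n S T"
      proof (cases "n \<in> W")
        case True
        have "S \<subseteq> W - {n}"
        proof
          fix x assume x: "x \<in> S"
          then have "(x, n) \<in> R'" unfolding R'_def by simp
          then have "x \<in> W" using Wd True by blast
          moreover have "x < n" using x Ssub by auto
          ultimately show "x \<in> W - {n}" by simp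
        qed
        moreover have "W = (W - {n}) \<union> {n}" using True by auto
        ultimately show ?thesis unfolding Grow_def using U by blast
      next
        case False
        then have "W = W - {n}" by simp
        then have "W \<in> T" using U by simp
        then show ?thesis unfolding Grow_def by simp
      qed
    qed
  qed
  ultimately show ?thesis unfolding NLT_def by blast
qed


lemma NLT_decomp:
  assumes "NLT (Suc n) T"
  shows "NLT n (Cut n T) \<and> (\<exists>S\<in>Cut n T. T = Grow n S (Cut n T))"
proof -
  obtain R where R: "NL_poset (Suc n) R" "T = order_ideals (Suc n) R" using assms unfolding NLT_def by blast
  have Rsub: "R \<subseteq> {0..<Suc n} \<times> {0..<Suc n}" and po: "partial_order_on {0..<Suc n} R"
    and nl: "\<forall>x y. (x, y) \<in> R \<longrightarrow> x \<le> y" using R(1) unfolding NL_poset_def by auto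
  have refl: "\<forall>x\<in>{0..<Suc n}. (x,x) \<in> R" and tr: "trans R" and an: "antisym R"
    using po unfolding partial_order_on_def preorder_on_def refl_on_def by auto
  have mem: "x < Suc n \<and> y < Suc n \<and> x \<le> y" if "(x, y) \<in> R" for x y
  proof -
    have "(x, y) \<in> {0..<Suc n} \<times> {0..<Suc n}" by (rule subsetD[OF Rsub that])
    then show ?thesis using nl that by auto
  qed
  have memT: "U \<in> T \<longleftrightarrow> U \<subseteq> {0..<Suc n} \<and> (\<forall>y\<in>U. \<forall>x. (x, y) \<in> R \<longrightarrow> x \<in> U)" for U
    by (simp add: R(2) order_ideals_def)
  define R0 where "R0 = R \<inter> ({0..<n} \<times> {0..<n})"
  have R0sub: "R0 \<subseteq> {0..<n} \<times> {0..<n}" unfolding R0_def by blast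
  have R0refl: "refl_on {0..<n} R0" unfolding refl_on_def R0_def using refl by auto
  have R0tr: "trans R0"
  proof (rule transI)
    fix x y z assume "(x, y) \<in> R0" "(y, z) \<in> R0"
    then show "(x, z) \<in> R0" using tr unfolding R0_def trans_def by auto
  qed
  have R0an: "antisym R0" using an unfolding R0_def antisym_def by blast
  have R0nl: "\<forall>x y. (x, y) \<in> R0 \<longrightarrow> x \<le> y" using nl unfolding R0_def by blast
  have NL0: "NL_poset n R0" unfolding NL_poset_def partial_order_on_def preorder_on_def
    using R0sub R0refl R0tr R0an R0nl by blast
  have memC: "U \<in> Cut n T \<longleftrightarrow> U \<subseteq> {0..<n} \<and> (\<forall>y\<in>U. \<forall>x. (x, y) \<in> R \<longrightarrow> x \<in> U)" for U
  proof
    assume "U \<in> Cut n T"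
    then have "U \<in> T" "n \<notin> U" unfolding Cut_def by auto
    then show "U \<subseteq> {0..<n} \<and> (\<forall>y\<in>U. \<forall>x. (x, y) \<in> R \<longrightarrow> x \<in> U)" using memT less_Suc_eq by auto
  next
    assume "U \<subseteq> {0..<n} \<and> (\<forall>y\<in>U. \<forall>x. (x, y) \<in> R \<longrightarrow> x \<in> U)"
    then show "U \<in> Cut n T" unfolding Cut_def using memT by auto
  qed
  have "Cut n T = order_ideals n R0"
  proof (rule set_eqI)
    fix U
    show "U \<in> Cut n T \<longleftrightarrow> U \<in> order_ideals n R0"
    proof
      assume "U \<in> Cut n T"
      then show "U \<in> order_ideals n R0" unfolding memC order_ideals_def R0_def by auto
    next
      assume U: "U \<in> order_ideals n R0"
      then have Us: "U \<subseteq> {0..<n}" and Ud: "\<forall>y\<in>U. \<forall>x. (x, y) \<in> R0 \<longrightarrow> x \<in> U"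
        unfolding order_ideals_def by auto
      have "\<forall>y\<in>U. \<forall>x. (x, y) \<in> R \<longrightarrow> x \<in> U"
      proof (intro ballI allI impI)
        fix y x assume y: "y \<in> U" and xy: "(x, y) \<in> R"
        have "y < n" using y Us by auto
        moreover have "x \<le> y" using mem[OF xy] by simp
        ultimately have "(x, y) \<in> R0" unfolding R0_def using xy by simp
        then show "x \<in> U" using Ud y by blast
      qed
      then show "U \<in> Cut n T" unfolding memC using Us by simp
    qed
  qed
  then have NC: "NLT n (Cut n T)" unfolding NLT_def using NL0 by blast
  define S where "S = {x. (x, n) \<in> R \<and> x < n}"
  have SC: "S \<in> Cut n T" unfolding memC
  proof (intro conjI ballI allI impI)
    show "S \<subseteq> {0..<n}" unfolding S_def by auto
  next
    fix y x assume y: "y \<in> S" and xy: "(x, y) \<in> R"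
    then have "(x, n) \<in> R" using tr unfolding S_def trans_def by blast
    moreover have "x < n" using mem[OF xy] y unfolding S_def by simp
    ultimately show "x \<in> S" unfolding S_def by simp
  qed
  have "T = Grow n S (Cut n T)"
  proof (rule set_eqI)
    fix U
    show "U \<in> T \<longleftrightarrow> U \<in> Grow n S (Cut n T)"
    proof
      assume U: "U \<in> T"
      show "U \<in> Grow n S (Cut n T)"
      proof (cases "n \<in> U")
        case False
        then show ?thesis using U unfolding Grow_def Cut_def by simp
      next
        case True
        have Us: "U \<subseteq> {0..<Suc n}" and Ud: "\<forall>y\<in>U. \<forall>x. (x, y) \<in> R \<longrightarrow> x \<in> U"
          using U memT by auto
        have "U - {n} \<in> Cut n T" unfolding memC
        proof (intro conjI ballI allI impI)
          show "U - {n} \<subseteq> {0..<n}" using Us by auto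
        next
          fix y x assume y: "y \<in> U - {n}" and xy: "(x, y) \<in> R"
          have "x \<in> U" using Ud y xy by blast
          moreover have "y < n" using y Us by auto
          moreover have "x \<le> y" using mem[OF xy] by simp
          ultimately show "x \<in> U - {n}" by simp
        qed
        moreover have "S \<subseteq> U - {n}" unfolding S_def using Ud True by auto
        moreover have "U = (U - {n}) \<union> {n}" using True by auto
        ultimately show ?thesis unfolding Grow_def by blast
      qed
    next
      assume "U \<in> Grow n S (Cut n T)"
      then consider "U \<in> Cut n T" | V where "V \<in> Cut n T" "S \<subseteq> V" "U = V \<union> {n}"
        unfolding Grow_def by blast
      then show "U \<in> T"
      proof cases
        case 1
        then show ?thesis unfolding Cut_def by simp
      next
        case 2
        have Vs: "V \<subseteq> {0..<n}" and Vd: "\<forall>y\<in>V. \<forall>x. (x, y) \<in> R \<longrightarrow> x \<in> V"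
          using 2(1) memC by auto
        have "\<forall>y\<in>U. \<forall>x. (x, y) \<in> R \<longrightarrow> x \<in> U"
        proof (intro ballI allI impI)
          fix y x assume y: "y \<in> U" and xy: "(x, y) \<in> R"
          show "x \<in> U"
          proof (cases "y = n")
            case True
            have "x \<le> n" using mem[OF xy] True by simp
            then have "x = n \<or> x \<in> S" unfolding S_def using xy True by auto
            then show ?thesis using 2 by auto
          next
            case False
            then have "y \<in> V" using y 2 by auto
            then show ?thesis using Vd xy 2 by auto
          qed
        qed
        moreover have "U \<subseteq> {0..<Suc n}" using Vs 2 by auto
        ultimately show ?thesis using memT by blast
      qed
    qed
  qed
  then show ?thesis using NC SC by blast
qed


lemma nmem: "\<forall>U\<in>T. U \<subseteq> {0..<(n::nat)} \<Longrightarrow> U \<in> T \<Longrightarrow> n \<notin> U"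
proof
  assume "\<forall>U\<in>T. U \<subseteq> {0..<n}" "U \<in> T" "n \<in> U"
  then have "n \<in> {0..<n}" by blast
  then show False by simp
qed

lemma Cut_Grow: "\<forall>U\<in>T. U \<subseteq> {0..<n} \<Longrightarrow> Cut n (Grow n S T) = T"
  unfolding Cut_def Grow_def using nmem[of T n] by auto

lemma sc_Grow:
  assumes "\<forall>U\<in>T. U \<subseteq> {0..<n}" "S \<in> T"
  shows "smallest_containing n (Grow n S T) = insert n S"
  unfolding smallest_containing_def
proof (rule the_equality)
  have "\<forall>U\<in>Grow n S T. n \<in> U \<longrightarrow> insert n S \<subseteq> U"
  proof (intro ballI impI)
    fix U assume "U \<in> Grow n S T" "n \<in> U"
    then consider "U \<in> T" "n \<in> U" | V where "V \<in> T" "S \<subseteq> V" "U = V \<union> {n}" unfolding Grow_def by blast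
    then show "insert n S \<subseteq> U"
    proof cases
      case 1 then show ?thesis using nmem[OF assms(1)] by blast
    next
      case 2 then show ?thesis by blast
    qed
  qed
  moreover have "insert n S \<in> Grow n S T" unfolding Grow_def using assms(2) by blast
  ultimately show "insert n S \<in> Grow n S T \<and> n \<in> insert n S \<and> (\<forall>U\<in>Grow n S T. n \<in> U \<longrightarrow> insert n S \<subseteq> U)"
    by simp
  fix S' assume "S' \<in> Grow n S T \<and> n \<in> S' \<and> (\<forall>U\<in>Grow n S T. n \<in> U \<longrightarrow> S' \<subseteq> U)"
  then show "S' = insert n S" using \<open>insert n S \<in> Grow n S T\<close> \<open>\<forall>U\<in>Grow n S T. n \<in> U \<longrightarrow> insert n S \<subseteq> U\<close>
    by (meson equalityI insertI1)
qed

lemma Next_Grow: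
  assumes "\<forall>U\<in>T. U \<subseteq> {0..<n}" "S \<in> T"
  shows "Next (Suc n) (Grow n S T) = (case NextS S T of Some S'' \<Rightarrow> Some (Grow n S'' T)
           | None \<Rightarrow> map_option (Grow n {}) (Next n T))"
proof -
  have "n \<notin> S" using nmem[OF assms] .
  then have "insert n S - {n} = S" by simp
  then show ?thesis using Cut_Grow[OF assms(1)] sc_Grow[OF assms] by (simp add: Let_def)
qed

lemma First_NLT: "NLT n (First n)"
proof (induction n)
  case 0
  have "NL_poset 0 {}" unfolding NL_poset_def partial_order_on_def preorder_on_def refl_on_def
    by simp
  moreover have "order_ideals 0 {} = {{}}" unfolding order_ideals_def by auto
  ultimately show ?case unfolding NLT_def by auto
next
  case (Suc n)
  then show ?case using NLT_Grow NLT_empty by simp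
qed

lemma Next_NLT: "NLT n T \<Longrightarrow> Next n T = Some T' \<Longrightarrow> NLT n T'"
proof (induction n arbitrary: T T')
  case 0
  then show ?case by simp
next
  case (Suc n)
  obtain S where C: "NLT n (Cut n T)" "S \<in> Cut n T" "T = Grow n S (Cut n T)"
    using NLT_decomp[OF Suc.prems(1)] by blast
  have sub: "\<forall>U\<in>Cut n T. U \<subseteq> {0..<n}" using C(1) NLT_sub by blast
  have eq: "Next (Suc n) T = (case NextS S (Cut n T) of Some S'' \<Rightarrow> Some (Grow n S'' (Cut n T))
           | None \<Rightarrow> map_option (Grow n {}) (Next n (Cut n T)))"
    using Next_Grow[OF sub C(2)] C(3) by simp
  show ?case
  proof (cases "NextS S (Cut n T)")
    case None
    then obtain T'' where "Next n (Cut n T) = Some T''" "T' = Grow n {} T''" using eq Suc.prems(2) by auto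
    moreover have "NLT n T''" using Suc.IH[OF C(1)] calculation(1) by blast
    ultimately show ?thesis using NLT_Grow NLT_empty by simp
  next
    case (Some S'')
    have "S'' \<in> Cut n T" using NextS_mem[OF Some] NLT_finite[OF C(1)] sub finite_subset by blast
    then have "T' = Grow n S'' (Cut n T)" using eq Suc.prems(2) Some by simp
    then show ?thesis using NLT_Grow C(1) \<open>S'' \<in> Cut n T\<close> by simp
  qed
qed

lemma iter_NLT: "iterNext n k = Some T \<Longrightarrow> NLT n T"
proof (induction k arbitrary: T)
  case 0
  then have "T = First n" by simp
  then show ?case using First_NLT by simp
next
  case (Suc k)
  then obtain T0 where "iterNext n k = Some T0" "Next n T0 = Some T" by (auto split: Option.bind_splits)
  then show ?case using Suc.IH Next_NLT by blast
qed


lemma iter_step: "iterNext n k = Some T \<Longrightarrow> iterNext n (Suc k) = Next n T"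
  by simp

lemma chain_A:
  assumes T: "NLT n T" and k: "iterNext (Suc n) k = Some (Grow n {} T)"
  shows "S \<in> T \<Longrightarrow> \<exists>k'. iterNext (Suc n) k' = Some (Grow n S T)"
proof (induction "card {U\<in>T. llex_less U S}" arbitrary: S rule: less_induct)
  case less
  have fT: "finite T" using NLT_finite[OF T] .
  have sub: "\<forall>U\<in>T. U \<subseteq> {0..<n}" using NLT_sub[OF T] by blast
  have fin: "\<forall>U\<in>T. finite U" using sub finite_subset by blast
  show ?case
  proof (cases "S = {}")
    case True
    then show ?thesis using k by blast
  next
    case False
    define F where "F = {U\<in>T. llex_less U S}"
    have "finite F" using fT unfolding F_def by simp
    moreover have "{} \<in> F" unfolding F_def using NLT_empty[OF T] llex_empty[OF _ False] fin less.prems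
      by blast
    then have "F \<noteq> {}" by blast
    moreover have "\<forall>A\<in>F. finite A" using fin unfolding F_def by blast
    ultimately have "\<exists>M\<in>F. \<forall>V\<in>F. V = M \<or> llex_less V M" by (rule llex_max)
    then obtain P where P: "P \<in> F" "\<forall>V\<in>F. V = P \<or> llex_less V P" by blast
    have PT: "P \<in> T" and PS: "llex_less P S" using P(1) unfolding F_def by auto
    have nob: "\<not> (\<exists>V\<in>T. llex_less P V \<and> llex_less V S)"
    proof
      assume "\<exists>V\<in>T. llex_less P V \<and> llex_less V S"
      then obtain V where V: "V \<in> T" "llex_less P V" "llex_less V S" by blast
      then have "V \<in> F" unfolding F_def by simp
      then have "V = P \<or> llex_less V P" using P(2) by blast
      then show False using V(2) llex_irrefl[of P] llex_trans[of P V P] by auto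
    qed
    have NS: "NextS P T = Some S" by (rule NextS_Some[OF fin less.prems PS nob])
    have "{U\<in>T. llex_less U P} \<subset> F"
    proof
      show "{U\<in>T. llex_less U P} \<subseteq> F" unfolding F_def using llex_trans[of _ P S] PS by auto
      show "{U\<in>T. llex_less U P} \<noteq> F" using P(1) llex_irrefl[of P] by blast
    qed
    then have "card {U\<in>T. llex_less U P} < card F" using \<open>finite F\<close> psubset_card_mono by blast
    then obtain k' where k': "iterNext (Suc n) k' = Some (Grow n P T)"
      using less.hyps[OF _ PT] unfolding F_def by blast
    have "iterNext (Suc n) (Suc k') = Next (Suc n) (Grow n P T)" using k' by simp
    also have "\<dots> = Some (Grow n S T)" using Next_Grow[OF sub PT] NS by simp
    finally show ?thesis by blast
  qed
qed

lemma chain_B: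
  assumes T: "NLT n T" and k: "iterNext (Suc n) k = Some (Grow n {} T)"
  shows "\<exists>k'. iterNext (Suc n) k' = map_option (Grow n {}) (Next n T)"
proof -
  have fT: "finite T" using NLT_finite[OF T] .
  have sub: "\<forall>U\<in>T. U \<subseteq> {0..<n}" using NLT_sub[OF T] by blast
  have fin: "\<forall>U\<in>T. finite U" using sub finite_subset by blast
  have "T \<noteq> {}" using NLT_empty[OF T] by blast
  then have "\<exists>M\<in>T. \<forall>V\<in>T. V = M \<or> llex_less V M" using llex_max[OF fT _ fin] by blast
  then obtain L where L: "L \<in> T" "\<forall>V\<in>T. V = L \<or> llex_less V L" by blast
  have "\<not> (\<exists>U\<in>T. llex_less L U)"
  proof
    assume "\<exists>U\<in>T. llex_less L U"
    then obtain U where U: "U \<in> T" "llex_less L U" by blast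
    then have "U = L \<or> llex_less U L" using L(2) by blast
    then show False using U(2) llex_irrefl[of L] llex_trans[of L U L] by auto
  qed
  then have NS: "NextS L T = None" by (rule NextS_None)
  obtain k' where k': "iterNext (Suc n) k' = Some (Grow n L T)" using chain_A[OF T k L(1)] by blast
  have "iterNext (Suc n) (Suc k') = Next (Suc n) (Grow n L T)" using k' by simp
  also have "\<dots> = map_option (Grow n {}) (Next n T)" using Next_Grow[OF sub L(1)] NS by simp
  finally show ?thesis by blast
qed

lemma cover: "iterNext n k = Some T \<Longrightarrow> \<exists>k'. iterNext (Suc n) k' = Some (Grow n {} T)"
proof (induction k arbitrary: T)
  case 0
  then have "iterNext (Suc n) 0 = Some (Grow n {} T)" by simp
  then show ?case by blast
next
  case (Suc k)
  then obtain T0 where T0: "iterNext n k = Some T0" "Next n T0 = Some T" by (auto split: Option.bind_splits)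
  obtain k' where k': "iterNext (Suc n) k' = Some (Grow n {} T0)" using Suc.IH[OF T0(1)] by blast
  have "NLT n T0" using iter_NLT[OF T0(1)] .
  from chain_B[OF this k'] T0(2) show ?case by simp
qed

lemma all_reached: "NLT n T \<Longrightarrow> \<exists>k. iterNext n k = Some T"
proof (induction n arbitrary: T)
  case 0
  have "T \<subseteq> {{}}"
  proof
    fix U assume "U \<in> T"
    then have "U \<subseteq> {0..<0}" using NLT_sub[OF 0] by blast
    then show "U \<in> {{}}" by simp
  qed
  moreover have "{} \<in> T" using NLT_empty[OF 0] .
  ultimately have "T = {{}}" by blast
  then have "iterNext 0 0 = Some T" by simp
  then show ?case by blast
next
  case (Suc n)
  obtain S where C: "NLT n (Cut n T)" "S \<in> Cut n T" "T = Grow n S (Cut n T)"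
    using NLT_decomp[OF Suc.prems] by blast
  obtain k where "iterNext n k = Some (Cut n T)" using Suc.IH[OF C(1)] by blast
  then obtain k' where "iterNext (Suc n) k' = Some (Grow n {} (Cut n T))" using cover by blast
  then obtain k'' where "iterNext (Suc n) k'' = Some (Grow n S (Cut n T))" using chain_A[OF C(1) _ C(2)] by blast
  then show ?case using C(3) by metis
qed

theorem theorem5p11:
  fixes n :: nat
  shows "{T. \<exists>k. iterNext n k = Some T} = {T. NLT n T}"
  using iter_NLT all_reached by blast

end
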